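(* Let $\mathcal{X}$ be a finite set and $\underline{Q}$ a lower transition rate operator on $\mathcal{L}(\mathcal{X})$. Then for all $f\in\mathcal{L}(\mathcal{X})$, $x\in\mathcal{X}$ and $t,s>0$: (1) if $f(x)>\min f$ then $\underline{T}_tf(x)>\min f$; and $\underline{T}_tf(x)>\min f\iff\underline{T}_sf(x)>\min f$; (2) if $f(x)<\max f$ then $\underline{T}_tf(x)<\max f$; and $\underline{T}_tf(x)<\max f\iff\underline{T}_sf(x)<\max f$; (3) if $f(x)>\min f$ then $\overline{T}_tf(x)>\min f$; and $\overline{T}_tf(x)>\min f\iff\overline{T}_sf(x)>\min f$; (4) if $f(x)<\max f$ then $\overline{T}_tf(x)<\max f$; and $\overline{T}_tf(x)<\max f\iff\overline{T}_sf(x)<\max f$.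
   Context: $\mathcal{L}(\mathcal{X})$ is the set of real-valued functions on $\mathcal{X}$ with pointwise operations and order, real constants identified with constant functions, $\mathbb{I}_y$ the indicator of $\{y\}$. A lower transition rate operator is a map $\underline{Q}\colon\mathcal{L}(\mathcal{X})\to\mathcal{L}(\mathcal{X})$ such that for all $f,g$, $\lambda\ge0$, $\mu\in\mathbb{R}$, $x,y\in\mathcal{X}$: $\underline{Q}(\mu)=0$; $\underline{Q}(f+g)\ge\underline{Q}f+\underline{Q}g$; $\underline{Q}(\lambda f)=\lambda\underline{Q}f$; $x\ne y\Rightarrow\underline{Q}(\mathbb{I}_y)(x)\ge0$. For each $f$, $t\mapsto\underline{T}_tf$ is the unique solution on $[0,\infty)$ of $\frac{d}{dt}\underline{T}_tf=\underline{Q}\,\underline{T}_tf$ with $\underline{T}_0f=f$ (existence and uniqueness are known), and $\overline{T}_tf\coloneqq-\underline{T}_t(-f)$. *)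

theory Defs
  imports "HOL-Analysis.Analysis"
begin

definition lower_transition_rate_operator :: "(('x \<Rightarrow> real) \<Rightarrow> ('x \<Rightarrow> real)) \<Rightarrow> bool" where
  "lower_transition_rate_operator Q \<longleftrightarrow>
     (\<forall>\<mu>::real. Q (\<lambda>_. \<mu>) = (\<lambda>_. 0)) \<and>
     (\<forall>f g x. Q (\<lambda>y. f y + g y) x \<ge> Q f x + Q g x) \<and>
     (\<forall>c::real. c \<ge> 0 \<longrightarrow> (\<forall>f. Q (\<lambda>y. c * f y) = (\<lambda>y. c * Q f y))) \<and>
     (\<forall>x y. x \<noteq> y \<longrightarrow> Q (\<lambda>z. if z = y then 1 else 0) x \<ge> 0)"

text \<open>T is the (unique) solution family: for every f, t \<mapsto> T t f solves
  d/dt T_t f = Q (T_t f) on [0,\<infinity>) with T_0 f = f (derivative taken componentwise,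
  which for finite X coincides with the derivative in L(X); one-sided at t = 0).\<close>
definition lower_semigroup_of ::
  "(('x \<Rightarrow> real) \<Rightarrow> ('x \<Rightarrow> real)) \<Rightarrow> (real \<Rightarrow> ('x \<Rightarrow> real) \<Rightarrow> ('x \<Rightarrow> real)) \<Rightarrow> bool" where
  "lower_semigroup_of Q T \<longleftrightarrow>
     (\<forall>f. T 0 f = f \<and>
        (\<forall>t \<ge> 0. \<forall>x. ((\<lambda>s. T s f x) has_real_derivative Q (T t f) x) (at t within {0..})))"

definition upper_of :: "(real \<Rightarrow> ('x \<Rightarrow> real) \<Rightarrow> ('x \<Rightarrow> real)) \<Rightarrow> real \<Rightarrow> ('x \<Rightarrow> real) \<Rightarrow> ('x \<Rightarrow> real)" where
  "upper_of T t f = (\<lambda>x. - T t (\<lambda>y. - f y) x)"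

end

theory Submission
  imports Defs
begin


definition ind :: "'x \<Rightarrow> 'x \<Rightarrow> real" where "ind y = (\<lambda>z. if z = y then 1 else 0)"

locale ltro =
  fixes Q :: "('x::finite \<Rightarrow> real) \<Rightarrow> ('x \<Rightarrow> real)"
  assumes L: "lower_transition_rate_operator Q"
begin

lemma const: "Q (\<lambda>_. \<mu>) = (\<lambda>_. 0)" using L unfolding lower_transition_rate_operator_def by blast
lemma super: "Q (\<lambda>y. f y + g y) x \<ge> Q f x + Q g x" using L unfolding lower_transition_rate_operator_def by blast
lemma hom: "c \<ge> 0 \<Longrightarrow> Q (\<lambda>y. c * f y) = (\<lambda>y. c * Q f y)" using L unfolding lower_transition_rate_operator_def by blast
lemma offd: "x \<noteq> y \<Longrightarrow> Q (ind y) x \<ge> 0" using L unfolding lower_transition_rate_operator_def ind_def by blast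

lemma transl: "Q (\<lambda>y. h y + \<mu>) = Q h"
proof
  fix x
  have "Q (\<lambda>y. h y + \<mu>) x \<ge> Q h x + Q (\<lambda>_. \<mu>) x" by (rule super)
  moreover have "Q (\<lambda>y. (h y + \<mu>) + (- \<mu>)) x \<ge> Q (\<lambda>y. h y + \<mu>) x + Q (\<lambda>_. -\<mu>) x" by (rule super)
  ultimately show "Q (\<lambda>y. h y + \<mu>) x = Q h x" by (simp add: const)
qed

lemma negsum: "Q g y + Q (\<lambda>z. - g z) y \<le> 0"
proof -
  have "Q (\<lambda>z. g z + - g z) y \<ge> Q g y + Q (\<lambda>z. - g z) y" by (rule super)
  then show ?thesis by (simp add: const)
qed

lemma offdiag_nonneg_S:
  assumes "finite S"
  shows "\<forall>g. (\<forall>z. g z \<ge> 0) \<longrightarrow> g y = 0 \<longrightarrow> (\<forall>z. z \<notin> S \<longrightarrow> g z = 0) \<longrightarrow> Q g y \<ge> 0"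
  using assms
proof (induction S rule: finite_induct)
  case empty
  show ?case
  proof (intro allI impI)
    fix g :: "'x \<Rightarrow> real" assume "\<forall>z. z \<notin> {} \<longrightarrow> g z = 0"
    then have "g = (\<lambda>_. 0)" by auto
    then show "Q g y \<ge> 0" by (simp add: const)
  qed
next
  case (insert w S)
  show ?case
  proof (intro allI impI)
    fix g :: "'x \<Rightarrow> real"
    assume g0: "\<forall>z. g z \<ge> 0" and gy: "g y = 0" and gs: "\<forall>z. z \<notin> insert w S \<longrightarrow> g z = 0"
    define g' where "g' = g(w := 0)"
    have ih: "Q g' y \<ge> 0" using insert.IH g0 gy gs unfolding g'_def by auto
    show "Q g y \<ge> 0"
    proof (cases "w = y")
      case True
      then have "g = g'" using gy unfolding g'_def by auto
      then show ?thesis using ih by simp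
    next
      case False
      have eq: "g = (\<lambda>z. (g w * ind w z) + g' z)" unfolding g'_def ind_def by auto
      have "Q (\<lambda>z. (g w * ind w z) + g' z) y \<ge> Q (\<lambda>z. g w * ind w z) y + Q g' y" by (rule super)
      moreover have "Q (\<lambda>z. g w * ind w z) y = g w * Q (ind w) y" using hom[of "g w" "ind w"] g0 by simp
      moreover have "g w * Q (ind w) y \<ge> 0" using offd[of y w] False g0 by simp
      ultimately show ?thesis using ih eq by simp
    qed
  qed
qed

lemma offdiag_nonneg: "(\<And>z. g z \<ge> 0) \<Longrightarrow> g y = 0 \<Longrightarrow> Q g y \<ge> 0"
  using offdiag_nonneg_S[of UNIV y] by auto

lemma diag_le0: "Q (ind y) y \<le> 0"
proof -
  have "Q (\<lambda>z. ind y z + (1 - ind y z)) y \<ge> Q (ind y) y + Q (\<lambda>z. 1 - ind y z) y" by (rule super)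
  moreover have "Q (\<lambda>z. 1 - ind y z) y \<ge> 0" by (rule offdiag_nonneg) (auto simp: ind_def)
  ultimately show ?thesis by (simp add: const)
qed

lemma diag_bound: assumes "\<And>z. g z \<ge> 0" shows "Q g y \<ge> g y * Q (ind y) y"
proof -
  define g' where "g' = g(y := 0)"
  have eq: "g = (\<lambda>z. (g y * ind y z) + g' z)" unfolding g'_def ind_def by auto
  have "Q (\<lambda>z. (g y * ind y z) + g' z) y \<ge> Q (\<lambda>z. g y * ind y z) y + Q g' y" by (rule super)
  moreover have "Q (\<lambda>z. g y * ind y z) y = g y * Q (ind y) y" using hom[of "g y" "ind y"] assms by simp
  moreover have "Q g' y \<ge> 0" by (rule offdiag_nonneg) (use assms in \<open>auto simp: g'_def\<close>)
  ultimately show ?thesis using eq by simp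
qed

lemma lower_any: "Q g y \<ge> 2 * (\<Sum>z\<in>UNIV. \<bar>g z\<bar>) * Q (ind y) y"
proof -
  define n where "n = (\<Sum>z\<in>UNIV. \<bar>g z\<bar>)"
  have le: "\<bar>g z\<bar> \<le> n" for z unfolding n_def by (rule member_le_sum) auto
  have "Q g y = Q (\<lambda>z. g z + n) y" by (simp add: transl)
  also have "\<dots> \<ge> (g y + n) * Q (ind y) y" by (rule diag_bound) (use le in \<open>smt (verit)\<close>)
  finally have a: "Q g y \<ge> (g y + n) * Q (ind y) y" .
  have "(g y + n) * Q (ind y) y \<ge> (2*n) * Q (ind y) y"
    using diag_le0[of y] le[of y] by (intro mult_right_mono_neg) auto
  then show ?thesis using a unfolding n_def by simp
qed

definition K :: real where "K = (\<Sum>y\<in>UNIV. - 2 * Q (ind y) y)"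

lemma K_nonneg: "K \<ge> 0" unfolding K_def using diag_le0 by (intro sum_nonneg) auto

lemma lip: "Q h' y - Q h y \<le> K * (\<Sum>z\<in>UNIV. \<bar>h z - h' z\<bar>)"
proof -
  have "Q (\<lambda>z. h' z + (h z - h' z)) y \<ge> Q h' y + Q (\<lambda>z. h z - h' z) y" by (rule super)
  then have a: "Q h y \<ge> Q h' y + Q (\<lambda>z. h z - h' z) y" by simp
  have b: "Q (\<lambda>z. h z - h' z) y \<ge> 2 * (\<Sum>z\<in>UNIV. \<bar>h z - h' z\<bar>) * Q (ind y) y" by (rule lower_any)
  have "- 2 * Q (ind y) y \<le> K" unfolding K_def using diag_le0 by (intro member_le_sum) auto
  then have "(\<Sum>z\<in>UNIV. \<bar>h z - h' z\<bar>) * (- 2 * Q (ind y) y) \<le> (\<Sum>z\<in>UNIV. \<bar>h z - h' z\<bar>) * K"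
    by (intro mult_left_mono) auto
  then show ?thesis using a b by (simp add: algebra_simps)
qed


lemma transl2: "Q (\<lambda>z. c + h z) = Q h"
  using transl[of h c] by (simp add: add.commute)

lemma transl3: "Q (\<lambda>z. c - h z) = Q (\<lambda>z. - h z)"
  using transl2[of c "\<lambda>z. - h z"] by simp

lemma QE2:
  assumes e: "\<epsilon> = 1 \<or> \<epsilon> = -1" and g: "\<And>z. g z \<ge> 0"
  shows "\<epsilon> * Q (\<lambda>z. c + \<epsilon> * g z) y \<ge> g y * Q (ind y) y"
  using e
proof
  assume "\<epsilon> = 1" then show ?thesis using diag_bound[of g y, OF g] by (simp add: transl2 transl3)
next
  assume "\<epsilon> = -1"
  then show ?thesis using diag_bound[of g y, OF g] negsum[of g y] by (simp add: transl2 transl3)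
qed

lemma QE3:
  assumes e: "\<epsilon> = 1 \<or> \<epsilon> = -1" and g0: "\<And>z. g0 z \<ge> 0" and pos: "\<And>z. z \<notin> B \<Longrightarrow> g0 z > 0"
    and yB: "y \<in> B" and z0: "Q (\<lambda>z. c + \<epsilon> * g0 z) y = 0"
    and g: "\<And>z. g z \<ge> 0" and gB: "\<And>z. z \<in> B \<Longrightarrow> g z = 0" and g0B: "\<And>z. z \<in> B \<Longrightarrow> g0 z = 0"
  shows "Q (\<lambda>z. c + \<epsilon> * g z) y = 0"
proof -
  define l where "l = (\<Sum>z\<in>UNIV. g z / g0 z)"
  have l0: "l \<ge> 0" unfolding l_def using g g0 by (intro sum_nonneg) auto
  have gl: "g z \<le> l * g0 z" for z
  proof (cases "z \<in> B")
    case True then show ?thesis using gB g0B by simp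
  next
    case False
    have "g z / g0 z \<le> l" unfolding l_def using g g0 by (intro member_le_sum) auto
    then show ?thesis using pos[OF False] by (simp add: divide_le_eq)
  qed
  have d: "Q (\<lambda>z. l * g0 z - g z) y \<ge> 0" by (rule offdiag_nonneg) (use gl yB gB g0B in auto)
  have gy: "Q g y \<ge> 0" by (rule offdiag_nonneg) (use g gB yB in auto)
  from e show ?thesis
  proof
    assume e1: "\<epsilon> = 1"
    then have q0: "Q g0 y = 0" using z0 by (simp add: transl2 transl3)
    have "Q (\<lambda>z. g z + (l * g0 z - g z)) y \<ge> Q g y + Q (\<lambda>z. l * g0 z - g z) y" by (rule super)
    moreover have "Q (\<lambda>z. l * g0 z) y = 0" using hom[OF l0, of g0] q0 by simp
    ultimately have "Q g y \<le> 0" using d by simp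
    then show ?thesis using gy e1 by (simp add: transl2 transl3)
  next
    assume e1: "\<epsilon> = -1"
    then have q0: "Q (\<lambda>z. - g0 z) y = 0" using z0 by (simp add: transl2 transl3)
    have "Q (\<lambda>z. l * (- g0 z) + (l * g0 z - g z)) y \<ge> Q (\<lambda>z. l * (- g0 z)) y + Q (\<lambda>z. l * g0 z - g z) y" by (rule super)
    moreover have "Q (\<lambda>z. l * (- g0 z)) y = 0" using hom[OF l0, of "\<lambda>z. - g0 z"] q0 by simp
    ultimately have "Q (\<lambda>z. - g z) y \<ge> 0" using d by simp
    moreover have "Q (\<lambda>z. - g z) y \<le> 0" using negsum[of g y] gy by simp
    ultimately show ?thesis using e1 by (simp add: transl2 transl3)
  qed
qed

end


lemma cont_from_deriv:
  assumes "\<And>t. t \<ge> 0 \<Longrightarrow> (\<phi> has_real_derivative D t) (at t within {0..})" "0 \<le> a"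
  shows "continuous_on {a..b} \<phi>"
  unfolding continuous_on_eq_continuous_within
proof
  fix x assume x: "x \<in> {a..b}"
  have d: "(\<phi> has_real_derivative D x) (at x within {0..})" using assms x by auto
  have "continuous (at x within {0..}) \<phi>" by (rule DERIV_continuous[OF d])
  then show "continuous (at x within {a..b}) \<phi>" by (rule continuous_within_subset) (use assms in auto)
qed

lemma deriv_at:
  assumes "(\<phi> has_real_derivative d) (at t within {0..})" "t > 0"
  shows "(\<phi> has_real_derivative d) (at t)"
proof -
  have "t \<in> interior {0::real..}" using assms by auto
  then show ?thesis using assms at_within_interior by metis
qed

lemma gr_inc:
  fixes \<phi> D :: "real \<Rightarrow> real" and C a b :: real
  assumes "0 \<le> a" "a \<le> b"
    and deriv: "\<And>t. t \<ge> 0 \<Longrightarrow> (\<phi> has_real_derivative D t) (at t within {0..})"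
    and bound: "\<And>t. a \<le> t \<Longrightarrow> t \<le> b \<Longrightarrow> D t \<ge> C * \<phi> t"
  shows "\<phi> a * exp (-C*a) \<le> \<phi> b * exp (-C*b)"
proof (rule DERIV_nonneg_imp_increasing_open[OF \<open>a \<le> b\<close>])
  fix x assume x: "a < x" "x < b"
  have "(\<phi> has_real_derivative D x) (at x)" using deriv_at[OF deriv] x assms by auto
  then have "((\<lambda>t. \<phi> t * exp (-C*t)) has_real_derivative (D x * exp (-C*x) + \<phi> x * (exp (-C*x) * (-C)))) (at x)"
    by (auto intro!: derivative_eq_intros)
  moreover have "D x * exp (-C*x) + \<phi> x * (exp (-C*x) * (-C)) = (D x - C * \<phi> x) * exp (-C*x)"
    by (simp add: algebra_simps)
  moreover have "(D x - C * \<phi> x) * exp (-C*x) \<ge> 0" using bound[of x] x by auto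
  ultimately show "\<exists>y. ((\<lambda>t. \<phi> t * exp (-C*t)) has_real_derivative y) (at x) \<and> 0 \<le> y" by metis
next
  show "continuous_on {a..b} (\<lambda>t. \<phi> t * exp (-C*t))"
    using cont_from_deriv[OF deriv \<open>0 \<le> a\<close>] by (intro continuous_intros) auto
qed

definition rho :: "real \<Rightarrow> real" where "rho x = (min 0 x)\<^sup>2"

lemma rho_deriv: "(rho has_real_derivative 2 * min 0 x) (at x)"
proof -
  consider "x < 0" | "x > 0" | "x = 0" by linarith
  then show ?thesis
  proof cases
    case 1
    have "((\<lambda>y. y\<^sup>2) has_real_derivative 2 * min 0 x) (at x)" using 1 by (auto intro!: derivative_eq_intros)
    then show ?thesis
      by (rule has_field_derivative_transform_within_open[where S="{..<0}"]) (use 1 in \<open>auto simp: rho_def\<close>)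
  next
    case 2
    have "((\<lambda>y. 0) has_real_derivative 2 * min 0 x) (at x)" using 2 by (auto intro!: derivative_eq_intros)
    then show ?thesis
      by (rule has_field_derivative_transform_within_open[where S="{0<..}"]) (use 2 in \<open>auto simp: rho_def\<close>)
  next
    case 3
    have "((\<lambda>z. (rho z - rho 0) / (z - 0)) \<longlongrightarrow> 0) (at 0)"
    proof (rule Lim_null_comparison)
      show "\<forall>\<^sub>F z in at 0. norm ((rho z - rho 0) / (z - 0)) \<le> \<bar>z\<bar>"
        by (auto simp: rho_def power2_eq_square abs_mult min_def divide_simps intro!: always_eventually)
      show "((\<lambda>z::real. \<bar>z\<bar>) \<longlongrightarrow> 0) (at 0)"
        using tendsto_rabs[OF tendsto_ident_at[of 0 UNIV]] by simp
    qed
    then show ?thesis using 3 by (simp add: has_field_derivative_iff)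
  qed
qed



locale core = ltro Q for Q :: "('x::finite \<Rightarrow> real) \<Rightarrow> ('x \<Rightarrow> real)" +
  fixes T :: "real \<Rightarrow> ('x \<Rightarrow> real) \<Rightarrow> ('x \<Rightarrow> real)" and \<epsilon> c :: real and f :: "'x \<Rightarrow> real"
  assumes S: "lower_semigroup_of Q T" and e: "\<epsilon> = 1 \<or> \<epsilon> = -1"
    and f0: "\<And>y. \<epsilon> * (f y - c) \<ge> 0"
begin

definition u :: "'x \<Rightarrow> real \<Rightarrow> real" where "u y t = \<epsilon> * (T t f y - c)"

lemma ee: "\<epsilon> * \<epsilon> = 1" using e by auto

lemma Tform: "T t f = (\<lambda>z. c + \<epsilon> * u z t)"
proof
  fix z
  have "c + \<epsilon> * u z t = c + (\<epsilon> * \<epsilon>) * (T t f z - c)" unfolding u_def by (simp add: algebra_simps)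
  then show "T t f z = c + \<epsilon> * u z t" by (simp add: ee)
qed

lemma u0: "u y 0 = \<epsilon> * (f y - c)" using S unfolding u_def lower_semigroup_of_def by simp

lemma uderiv: "t \<ge> 0 \<Longrightarrow> ((\<lambda>s. u y s) has_real_derivative (\<epsilon> * Q (T t f) y)) (at t within {0..})"
proof -
  assume t: "t \<ge> 0"
  have "((\<lambda>s. T s f y) has_real_derivative Q (T t f) y) (at t within {0..})"
    using S t unfolding lower_semigroup_of_def by blast
  then have "((\<lambda>s. \<epsilon> * (T s f y - c)) has_real_derivative \<epsilon> * (Q (T t f) y - 0)) (at t within {0..})"
    by (intro DERIV_cmult DERIV_diff DERIV_const)
  then show ?thesis unfolding u_def by simp
qed

lemma unonneg: assumes t: "t \<ge> 0" shows "u y t \<ge> 0"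
proof -
  define \<phi> where "\<phi> t = (\<Sum>y\<in>UNIV. rho (u y t))" for t
  define D where "D t = (\<Sum>y\<in>UNIV. 2 * min 0 (u y t) * (\<epsilon> * Q (T t f) y))" for t
  define N where "N t = (\<Sum>z\<in>UNIV. \<bar>min 0 (u z t)\<bar>)" for t
  define n where "n = real (card (UNIV :: 'x set))"
  have deriv: "(\<phi> has_real_derivative D t) (at t within {0..})" if "t \<ge> 0" for t
    unfolding \<phi>_def D_def
    by (intro DERIV_sum DERIV_chain2[OF rho_deriv] uderiv that)
  have bound: "D t \<le> (2*K*n) * \<phi> t" if t: "t \<ge> 0" for t
  proof -
    have each: "2 * min 0 (u y t) * (\<epsilon> * Q (T t f) y) \<le> 2 * \<bar>min 0 (u y t)\<bar> * K * N t" for y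
    proof (cases "u y t \<ge> 0")
      case True
      have "min 0 (u y t) = 0" using True by (simp add: min_def)
      then show ?thesis by simp
    next
      case False
      define g' where "g' z = max 0 (u z t)" for z
      define h' where "h' = (\<lambda>z. c + \<epsilon> * g' z)"
      have "\<epsilon> * Q h' y \<ge> g' y * Q (ind y) y" unfolding h'_def by (rule QE2[OF e]) (simp add: g'_def)
      moreover have "g' y = 0" using False by (simp add: g'_def max_def)
      ultimately have hq: "\<epsilon> * Q h' y \<ge> 0" by simp
      have dif: "\<bar>T t f z - h' z\<bar> = \<bar>min 0 (u z t)\<bar>" for z
      proof -
        have "T t f z - h' z = \<epsilon> * (u z t - g' z)" unfolding h'_def by (subst Tform) (simp add: right_diff_distrib)
        also have "\<dots> = \<epsilon> * min 0 (u z t)" unfolding g'_def by (cases "u z t \<ge> 0") (simp_all add: min_def max_def)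
        finally show ?thesis using e by (auto simp: abs_mult)
      qed
      have dif2: "\<bar>h' z - T t f z\<bar> = \<bar>min 0 (u z t)\<bar>" for z using dif[of z] by linarith
      have l1: "Q h' y - Q (T t f) y \<le> K * N t" using lip[of h' y "T t f"] unfolding N_def dif .
      have l2: "Q (T t f) y - Q h' y \<le> K * N t" using lip[of "T t f" y h'] unfolding N_def dif2 .
      have "\<epsilon> * Q (T t f) y \<ge> - K * N t"
        using e
      proof
        assume "\<epsilon> = 1" then show ?thesis using l1 hq by simp
      next
        assume "\<epsilon> = -1" then show ?thesis using l2 hq by simp
      qed
      then have "min 0 (u y t) * (\<epsilon> * Q (T t f) y) \<le> min 0 (u y t) * (- K * N t)"
        by (rule mult_left_mono_neg) (use False in \<open>simp add: min_def\<close>)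
      moreover have "min 0 (u y t) * (- K * N t) = \<bar>min 0 (u y t)\<bar> * K * N t"
        using False by (simp add: min_def)
      ultimately show ?thesis by linarith
    qed
    have s1: "D t \<le> (\<Sum>y\<in>UNIV. 2 * \<bar>min 0 (u y t)\<bar> * K * N t)" unfolding D_def by (intro sum_mono each)
    have "(\<Sum>y\<in>UNIV. 2 * \<bar>min 0 (u y t)\<bar> * K * N t) = (\<Sum>y\<in>UNIV. (2 * K * N t) * \<bar>min 0 (u y t)\<bar>)"
      by (rule sum.cong) (simp_all add: mult_ac)
    also have "\<dots> = (2 * K * N t) * N t" unfolding N_def by (rule sum_distrib_left[symmetric])
    finally have s2: "(\<Sum>y\<in>UNIV. 2 * \<bar>min 0 (u y t)\<bar> * K * N t) = 2 * K * (N t)\<^sup>2"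
      by (simp add: power2_eq_square)
    have s3: "(N t)\<^sup>2 \<le> n * \<phi> t"
    proof -
      have "(N t)\<^sup>2 = (\<Sum>z\<in>UNIV. \<bar>min 0 (u z t)\<bar> * 1)\<^sup>2" unfolding N_def by simp
      also have "\<dots> \<le> (\<Sum>z\<in>UNIV. (\<bar>min 0 (u z t)\<bar>)\<^sup>2) * (\<Sum>z\<in>(UNIV::'x set). 1\<^sup>2)"
        by (rule Cauchy_Schwarz_ineq_sum)
      also have "\<dots> = n * \<phi> t" unfolding n_def \<phi>_def rho_def by simp
      finally show ?thesis .
    qed
    have "2 * K * (N t)\<^sup>2 \<le> 2 * K * (n * \<phi> t)" using K_nonneg s3 by (intro mult_left_mono) auto
    then show ?thesis using s1 s2 by (simp add: mult_ac)
  qed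
  have g: "(- \<phi> 0) * exp (-(2*K*n)*0) \<le> (- \<phi> t) * exp (-(2*K*n)*t)"
  proof (rule gr_inc[where \<phi>="\<lambda>t. - \<phi> t" and D="\<lambda>t. - D t" and C="2*K*n" and a=0 and b=t])
    show "0 \<le> (0::real)" by simp
    show "0 \<le> t" by (rule t)
    show "((\<lambda>t. - \<phi> t) has_real_derivative - D s) (at s within {0..})" if "s \<ge> 0" for s
      by (rule DERIV_minus) (rule deriv[OF that])
    show "2*K*n * (- \<phi> s) \<le> - D s" if "0 \<le> s" "s \<le> t" for s
      using bound[of s] that by simp
  qed
  have p0: "\<phi> 0 = 0" unfolding \<phi>_def rho_def using f0 by (simp add: u0 min_def)
  have "\<phi> t \<le> 0"
  proof -
    have "0 \<le> (- \<phi> t) * exp (-(2*K*n)*t)" using g p0 by simp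
    then have "\<phi> t * exp (-(2*K*n)*t) \<le> 0" by simp
    then show ?thesis by (simp add: mult_le_0_iff)
  qed
  moreover have nn: "\<forall>y\<in>UNIV. rho (u y t) \<ge> 0" unfolding rho_def by auto
  ultimately have "\<forall>y\<in>UNIV. rho (u y t) = 0" unfolding \<phi>_def
    using sum_nonneg_eq_0_iff[of UNIV "\<lambda>y. rho (u y t)"] sum_nonneg[of UNIV "\<lambda>y. rho (u y t)"] by auto
  then have "min 0 (u y t) = 0" unfolding rho_def by simp
  then show ?thesis by (simp add: min_def split: if_splits)
qed

lemma Qbound: "t \<ge> 0 \<Longrightarrow> \<epsilon> * Q (T t f) x \<ge> Q (ind x) x * u x t"
proof -
  assume t: "t \<ge> 0"
  have "\<epsilon> * Q (\<lambda>z. c + \<epsilon> * u z t) x \<ge> u x t * Q (ind x) x"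
    by (rule QE2[OF e]) (use unonneg t in auto)
  then show ?thesis by (simp add: Tform mult.commute)
qed

lemma upos: assumes "0 \<le> a" "a \<le> b" "u x a > 0" shows "u x b > 0"
proof -
  have g: "u x a * exp (- Q (ind x) x * a) \<le> u x b * exp (- Q (ind x) x * b)"
  proof (rule gr_inc[where \<phi>="u x" and D="\<lambda>t. \<epsilon> * Q (T t f) x" and C="Q (ind x) x" and a=a and b=b])
    show "0 \<le> a" "a \<le> b" by (rule assms)+
    show "(u x has_real_derivative \<epsilon> * Q (T s f) x) (at s within {0..})" if "s \<ge> 0" for s
      using uderiv[OF that, of x] by simp
    show "Q (ind x) x * u x s \<le> \<epsilon> * Q (T s f) x" if "a \<le> s" "s \<le> b" for s
      using Qbound[of s x] that assms by simp
  qed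
  have "0 < u x a * exp (- Q (ind x) x * a)" using assms by simp
  then have "0 < u x b * exp (- Q (ind x) x * b)" using g by linarith
  then show ?thesis by (simp add: zero_less_mult_iff)
qed

lemma upos_back: assumes s: "0 < s" "s \<le> t" and ut: "u x t > 0" shows "u x s > 0"
proof (rule ccontr)
  assume "\<not> u x s > 0"
  then have ux0: "u x s = 0" using unonneg[of s x] s by simp
  define B where "B = {y. u y s = 0}"
  have xB: "x \<in> B" using ux0 by (simp add: B_def)
  have zb: "u y r = 0" if "y \<in> B" "0 \<le> r" "r \<le> s" for y r
  proof (rule ccontr)
    assume "u y r \<noteq> 0"
    then have "u y r > 0" using unonneg[of r y] that by simp
    then have "u y s > 0" using upos[of r s y] that by simp
    then show False using that by (simp add: B_def)
  qed
  have posA: "u y s > 0" if "y \<notin> B" for y using unonneg[of s y] s that by (simp add: B_def)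
  have ev1: "\<forall>y\<in>-B. eventually (\<lambda>r. u y r > 0) (at_left s)"
  proof
    fix y assume y: "y \<in> -B"
    have "(u y has_real_derivative \<epsilon> * Q (T s f) y) (at s)"
      using deriv_at[OF uderiv[of s y]] s by simp
    then have "isCont (u y) s" by (rule DERIV_isCont)
    then have "(u y \<longlongrightarrow> u y s) (at s)" by (simp add: isCont_def)
    then have "eventually (\<lambda>r. 0 < u y r) (at s)" using posA y by (intro order_tendstoD(1)) auto
    then show "eventually (\<lambda>r. u y r > 0) (at_left s)" by (simp add: eventually_at_split)
  qed
  have ev: "eventually (\<lambda>r. r \<in> {s/2<..<s} \<and> (\<forall>y\<in>-B. u y r > 0)) (at_left s)"
  proof -
    have a: "eventually (\<lambda>r. r \<in> {s/2<..<s}) (at_left s)" using s by (intro eventually_at_left_real) simp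
    have b: "eventually (\<lambda>r. \<forall>y\<in>-B. u y r > 0) (at_left s)" by (rule eventually_ball_finite[OF _ ev1]) simp
    show ?thesis using eventually_conj[OF a b] by simp
  qed
  obtain r0 where r0: "r0 \<in> {s/2<..<s}" and r0A: "\<forall>y\<in>-B. u y r0 > 0"
    using eventually_happens'[OF _ ev] by auto
  have Qz: "Q (T r0 f) y = 0" if y: "y \<in> B" for y
  proof -
    have d1: "(u y has_real_derivative \<epsilon> * Q (T r0 f) y) (at r0)"
      using deriv_at[OF uderiv[of r0 y]] r0 s by simp
    have d2: "(u y has_real_derivative 0) (at r0)"
    proof (rule has_field_derivative_transform_within_open[where f="\<lambda>_. 0" and S="{0<..<s}"])
      show "((\<lambda>_. 0) has_real_derivative 0) (at r0)" by simp
      show "open {0<..<s}" by simp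
      show "r0 \<in> {0<..<s}" using r0 s by simp
      show "0 = u y r" if "r \<in> {0<..<s}" for r using zb[OF y, of r] that by simp
    qed
    have "\<epsilon> * Q (T r0 f) y = 0" using DERIV_unique[OF d1 d2] .
    then show ?thesis using e by auto
  qed
  have key: "Q (\<lambda>z. c + \<epsilon> * g z) y = 0"
    if y: "y \<in> B" and g: "\<And>z. g z \<ge> 0" and gB: "\<And>z. z \<in> B \<Longrightarrow> g z = 0" for y g
  proof (rule QE3[of \<epsilon> "\<lambda>z. u z r0" B y c g])
    show "\<epsilon> = 1 \<or> \<epsilon> = -1" by (rule e)
    show "0 \<le> u z r0" for z using unonneg[of r0 z] r0 s by simp
    show "0 < u z r0" if "z \<notin> B" for z using r0A that by simp
    show "y \<in> B" by (rule y)
    show "Q (\<lambda>z. c + \<epsilon> * u z r0) y = 0" using Qz[OF y] by (simp add: Tform)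
    show "0 \<le> g z" for z by (rule g)
    show "g z = 0" if "z \<in> B" for z using gB that .
    show "u z r0 = 0" if "z \<in> B" for z using zb[OF that, of r0] r0 s by simp
  qed
  define \<phi> where "\<phi> t = (\<Sum>y\<in>B. u y t)" for t
  define D where "D t = (\<Sum>y\<in>B. \<epsilon> * Q (T t f) y)" for t
  have deriv: "(\<phi> has_real_derivative D t) (at t within {0..})" if "t \<ge> 0" for t
    unfolding \<phi>_def D_def by (intro DERIV_sum uderiv that)
  have bound: "D t' \<le> (real (card B) * K) * \<phi> t'" if t': "s \<le> t'" for t'
  proof -
    have each: "\<epsilon> * Q (T t' f) y \<le> K * \<phi> t'" if y: "y \<in> B" for y
    proof -
      define g' where "g' z = (if z \<in> B then 0 else u z t')" for z
      define h' where "h' = (\<lambda>z. c + \<epsilon> * g' z)"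
      have hq: "Q h' y = 0" unfolding h'_def
        by (rule key[OF y]) (use unonneg t' s in \<open>auto simp: g'_def\<close>)
      have dif: "\<bar>T t' f z - h' z\<bar> = (if z \<in> B then u z t' else 0)" for z
      proof -
        have "T t' f z - h' z = \<epsilon> * (u z t' - g' z)" unfolding h'_def by (subst Tform) (simp add: right_diff_distrib)
        then have "\<bar>T t' f z - h' z\<bar> = \<bar>u z t' - g' z\<bar>" using e by (auto simp: abs_mult)
        then show ?thesis using unonneg[of t' z] t' s by (simp add: g'_def)
      qed
      have dif2: "\<bar>h' z - T t' f z\<bar> = (if z \<in> B then u z t' else 0)" for z using dif[of z] by linarith
      have sm: "(\<Sum>z\<in>UNIV. (if z \<in> B then u z t' else 0)) = \<phi> t'"
        unfolding \<phi>_def using sum.inter_restrict[of UNIV "\<lambda>z. u z t'" B] by simp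
      have l1: "Q h' y - Q (T t' f) y \<le> K * \<phi> t'" using lip[of h' y "T t' f"] unfolding dif sm .
      have l2: "Q (T t' f) y - Q h' y \<le> K * \<phi> t'" using lip[of "T t' f" y h'] unfolding dif2 sm .
      from e show ?thesis
      proof
        assume "\<epsilon> = 1" then show ?thesis using l2 hq by simp
      next
        assume "\<epsilon> = -1" then show ?thesis using l1 hq by simp
      qed
    qed
    have "D t' \<le> (\<Sum>y\<in>B. K * \<phi> t')" unfolding D_def by (intro sum_mono each)
    then show ?thesis by simp
  qed
  define C0 where "C0 = real (card B) * K"
  have g: "(- \<phi> s) * exp (- C0 * s) \<le> (- \<phi> t) * exp (- C0 * t)"
  proof (rule gr_inc[where \<phi>="\<lambda>t. - \<phi> t" and D="\<lambda>t. - D t" and C=C0 and a=s and b=t])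
    show "0 \<le> s" using s by simp
    show "s \<le> t" by (rule s)
    show "((\<lambda>t. - \<phi> t) has_real_derivative - D r) (at r within {0..})" if "r \<ge> 0" for r
      by (rule DERIV_minus) (rule deriv[OF that])
    show "C0 * (- \<phi> r) \<le> - D r" if "s \<le> r" "r \<le> t" for r
      using bound[of r] that by (simp add: C0_def)
  qed
  have p0: "\<phi> s = 0" unfolding \<phi>_def B_def by simp
  have "\<phi> t \<le> 0"
  proof -
    have "0 \<le> (- \<phi> t) * exp (- C0 * t)" using g p0 by simp
    then have "\<phi> t * exp (- C0 * t) \<le> 0" by simp
    then show ?thesis by (simp add: mult_le_0_iff)
  qed
  moreover have "u x t \<le> \<phi> t" unfolding \<phi>_def
    using xB unonneg s by (intro member_le_sum) auto
  ultimately show False using ut by simp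
qed

end


lemma part_gen:
  fixes Q :: "('x::finite \<Rightarrow> real) \<Rightarrow> ('x \<Rightarrow> real)"
  assumes L: "lower_transition_rate_operator Q" and S: "lower_semigroup_of Q T"
    and e: "\<epsilon> = 1 \<or> \<epsilon> = -1" and f0: "\<And>y. \<epsilon> * (f y - c) \<ge> 0"
    and t: "t > 0" and s: "s > 0"
  shows "(\<epsilon> * (f x - c) > 0 \<longrightarrow> \<epsilon> * (T t f x - c) > 0) \<and>
         (\<epsilon> * (T t f x - c) > 0 \<longleftrightarrow> \<epsilon> * (T s f x - c) > 0)"
proof -
  interpret core Q T \<epsilon> c f
    by unfold_locales (use L S e f0 in auto)
  have 1: "\<epsilon> * (f x - c) > 0 \<longrightarrow> \<epsilon> * (T t f x - c) > 0"
    using upos[of 0 t x] t unfolding u_def by (simp add: u0[unfolded u_def])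
  have 2: "u x t > 0 \<longleftrightarrow> u x s > 0"
    if "t > 0" "s > 0" for t s :: real
  proof -
    have "u x s > 0" if "u x t > 0" "t > 0" "s > 0" for t s :: real
    proof (cases "s \<le> t")
      case True then show ?thesis using upos_back[of s t x] that by simp
    next
      case False then show ?thesis using upos[of t s x] that by simp
    qed
    then show ?thesis using that by blast
  qed
  show ?thesis using 1 2[OF t s] unfolding u_def by simp
qed

lemma part_min:
  fixes Q :: "('x::finite \<Rightarrow> real) \<Rightarrow> ('x \<Rightarrow> real)"
  assumes L: "lower_transition_rate_operator Q" and S: "lower_semigroup_of Q T"
    and t: "t > 0" and s: "s > 0"
  shows "(f x > Min (range f) \<longrightarrow> T t f x > Min (range f)) \<and>
         (T t f x > Min (range f) \<longleftrightarrow> T s f x > Min (range f))"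
  using part_gen[OF L S _ _ t s, of 1 f "Min (range f)" x] by auto

lemma part_max:
  fixes Q :: "('x::finite \<Rightarrow> real) \<Rightarrow> ('x \<Rightarrow> real)"
  assumes L: "lower_transition_rate_operator Q" and S: "lower_semigroup_of Q T"
    and t: "t > 0" and s: "s > 0"
  shows "(f x < Max (range f) \<longrightarrow> T t f x < Max (range f)) \<and>
         (T t f x < Max (range f) \<longleftrightarrow> T s f x < Max (range f))"
  using part_gen[OF L S _ _ t s, of "-1" f "Max (range f)" x] by auto

lemma max_neg:
  fixes f :: "'x::finite \<Rightarrow> real"
  shows "Max (range (\<lambda>y. - f y)) = - Min (range f)"
proof (rule antisym)
  have "Max (range (\<lambda>y. - f y)) \<in> range (\<lambda>y. - f y)" by (rule Max_in) auto
  then obtain y0 where "Max (range (\<lambda>y. - f y)) = - f y0" by blast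
  moreover have "Min (range f) \<le> f y0" by (rule Min_le) auto
  ultimately show "Max (range (\<lambda>y. - f y)) \<le> - Min (range f)" by simp
next
  have "Min (range f) \<in> range f" by (rule Min_in) auto
  then obtain y1 where "Min (range f) = f y1" by blast
  moreover have "- f y1 \<le> Max (range (\<lambda>y. - f y))" by (rule Max_ge) auto
  ultimately show "- Min (range f) \<le> Max (range (\<lambda>y. - f y))" by simp
qed

lemma min_neg:
  fixes f :: "'x::finite \<Rightarrow> real"
  shows "Min (range (\<lambda>y. - f y)) = - Max (range f)"
proof (rule antisym)
  have "Max (range f) \<in> range f" by (rule Max_in) auto
  then obtain y0 where "Max (range f) = f y0" by blast
  moreover have "Min (range (\<lambda>y. - f y)) \<le> - f y0" by (rule Min_le) auto
  ultimately show "Min (range (\<lambda>y. - f y)) \<le> - Max (range f)" by simp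
next
  have "Min (range (\<lambda>y. - f y)) \<in> range (\<lambda>y. - f y)" by (rule Min_in) auto
  then obtain y1 where "Min (range (\<lambda>y. - f y)) = - f y1" by blast
  moreover have "f y1 \<le> Max (range f)" by (rule Max_ge) auto
  ultimately show "- Max (range f) \<le> Min (range (\<lambda>y. - f y))" by simp
qed

theorem proposition13:
  fixes Q :: "('x::finite \<Rightarrow> real) \<Rightarrow> ('x \<Rightarrow> real)"
    and T :: "real \<Rightarrow> ('x \<Rightarrow> real) \<Rightarrow> ('x \<Rightarrow> real)"
    and f :: "'x \<Rightarrow> real" and x :: 'x and t s :: real
  assumes "lower_transition_rate_operator Q"
    and "lower_semigroup_of Q T"
    and "t > 0" and "s > 0"
  shows "((f x > Min (range f) \<longrightarrow> T t f x > Min (range f)) \<and>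
         (T t f x > Min (range f) \<longleftrightarrow> T s f x > Min (range f))) \<and>
         ((f x < Max (range f) \<longrightarrow> T t f x < Max (range f)) \<and>
         (T t f x < Max (range f) \<longleftrightarrow> T s f x < Max (range f))) \<and>
         ((f x > Min (range f) \<longrightarrow> upper_of T t f x > Min (range f)) \<and>
         (upper_of T t f x > Min (range f) \<longleftrightarrow> upper_of T s f x > Min (range f))) \<and>
         ((f x < Max (range f) \<longrightarrow> upper_of T t f x < Max (range f)) \<and>
         (upper_of T t f x < Max (range f) \<longleftrightarrow> upper_of T s f x < Max (range f)))"
proof -
  note a = part_min[OF assms, of f x] part_max[OF assms, of f x]
  have b: "(- f x < Max (range (\<lambda>y. - f y)) \<longrightarrow> T t (\<lambda>y. - f y) x < Max (range (\<lambda>y. - f y))) \<and>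
         (T t (\<lambda>y. - f y) x < Max (range (\<lambda>y. - f y)) \<longleftrightarrow> T s (\<lambda>y. - f y) x < Max (range (\<lambda>y. - f y)))"
    using part_max[OF assms, of "\<lambda>y. - f y" x] by blast
  have c: "(- f x > Min (range (\<lambda>y. - f y)) \<longrightarrow> T t (\<lambda>y. - f y) x > Min (range (\<lambda>y. - f y))) \<and>
         (T t (\<lambda>y. - f y) x > Min (range (\<lambda>y. - f y)) \<longleftrightarrow> T s (\<lambda>y. - f y) x > Min (range (\<lambda>y. - f y)))"
    using part_min[OF assms, of "\<lambda>y. - f y" x] by blast
  have u: "upper_of T r f x = - T r (\<lambda>y. - f y) x" for r by (simp add: upper_of_def)
  show ?thesis using a b c unfolding max_neg min_neg u by argo
qed

end
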